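(* Let $t,k$ be integers with $3\le k\le t$. A sequence $l=(l_1,\dots,l_k)$ with entries in $\{1,\dots,t\}$ maximizes $c(l)$ among all such sequences if and only if: 1. the number $v^*$ of distinct treatments occurring in $l$ maximizes $f(v)$ over $v\in\{2,\dots,t\}$; 2. each treatment occurring in $l$ occurs either $n_-=\lfloor k/v^*\rfloor$ times or $n_+=n_-+1$ times; 3. the number of treatments occurring $n_+$ times in $l$ is $v_+=k-v^*\lfloor k/v^*\rfloor$; 4. the number of treatments occurring $n_-$ times in $l$ is $v_-=v^*-v_+$; 5. for every treatment occurring in $l$, all its occurrences are side by side (consecutive positions, cyclically). Moreover, the maximum value is $f(v^* )$, and $f(v^* )\le k-\sqrt{2k}$, with equality if $\sqrt{2k}$ is an integer.
   Context: For a sequence $l=(l_1,\dots,l_k)$ with entries in $\{1,\dots,t\}$, put $l_0=l_k$; $n_i$ is the number of occurrences of treatment $i$ in $l$ and $m_i$ is the number of $j\in\{1,\dots,k\}$ with $l_{j-1}=l_j=i$ (the sequence is read circularly). Define $c(l)=\frac12\big(k-\frac2k\sum_{i=1}^t n_i^2+\sum_{i=1}^t m_i\big)$ and, for positive integers $v$, $f(v)=-1+k-\frac v2-\big(2-\frac vk\big)\lfloor k/v\rfloor+\frac vk\lfloor k/v\rfloor^2$, where $\lfloor x\rfloor$ is the integer part of $x$. (In the paper, $c(l)$ is the trace of the per-block information bound for total effects $\tau+\lambda$ in the circular block model $\mathbb{E}(Y_{i,j})=\beta_i+\tau_{d(i,j)}+\lambda_{d(i,j-1)}$.) *)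

theory Defs
  imports Complex_Main
begin

text \<open>A sequence l = (l_1,...,l_k) is represented as a list; position j (0-based) has
  cyclic predecessor (j + k - 1) mod k, so that l_0 = l_k.\<close>

definition admissible :: "nat \<Rightarrow> nat \<Rightarrow> nat list \<Rightarrow> bool" where
  "admissible t k l \<longleftrightarrow> length l = k \<and> set l \<subseteq> {1..t}"

definition n_occ :: "nat list \<Rightarrow> nat \<Rightarrow> nat" where
  "n_occ l i = count_list l i"

definition m_occ :: "nat list \<Rightarrow> nat \<Rightarrow> nat" where
  "m_occ l i = card {j \<in> {0..<length l}.
      l ! ((j + length l - 1) mod length l) = i \<and> l ! j = i}"

definition c_val :: "nat \<Rightarrow> nat list \<Rightarrow> real" where
  "c_val t l = (1/2) * (real (length l)
      - (2 / real (length l)) * (\<Sum>i\<in>{1..t}. (real (n_occ l i))^2)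
      + (\<Sum>i\<in>{1..t}. real (m_occ l i)))"

definition f_val :: "nat \<Rightarrow> nat \<Rightarrow> real" where
  "f_val k v = -1 + real k - real v / 2
      - (2 - real v / real k) * of_int \<lfloor>real k / real v\<rfloor>
      + (real v / real k) * (of_int \<lfloor>real k / real v\<rfloor>)^2"

definition cyclically_consecutive :: "nat list \<Rightarrow> nat \<Rightarrow> bool" where
  "cyclically_consecutive l i \<longleftrightarrow>
     (\<exists>s len. {j \<in> {0..<length l}. l ! j = i} = {(s + r) mod length l | r. r < len})"

end

theory Submission
  imports Defs
begin


definition s_occ :: "nat list \<Rightarrow> nat \<Rightarrow> nat" where
  "s_occ l i = card {j \<in> {0..<length l}.
      l ! ((j + length l - 1) mod length l) \<noteq> i \<and> l ! j = i}"

lemma n_split: "n_occ l i = m_occ l i + s_occ l i"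
proof -
  have "n_occ l i = card {j. j < length l \<and> l ! j = i}"
    unfolding n_occ_def count_list_eq_length_filter length_filter_conv_card by metis
  also have "{j. j < length l \<and> l ! j = i} =
     {j \<in> {0..<length l}. l ! ((j + length l - 1) mod length l) = i \<and> l ! j = i} \<union>
     {j \<in> {0..<length l}. l ! ((j + length l - 1) mod length l) \<noteq> i \<and> l ! j = i}" by auto
  also have "card \<dots> = m_occ l i + s_occ l i"
    unfolding m_occ_def s_occ_def by (rule card_Un_disjoint) auto
  finally show ?thesis .
qed

lemma pred_mod: fixes x k :: nat assumes "1 \<le> k" shows "((x mod k) + k - 1) mod k = (x + k - 1) mod k"
proof -
  have "(x mod k) + k - 1 = x mod k + (k - 1)" "x + k - 1 = x + (k - 1)" using assms by auto
  then show ?thesis by (simp add: mod_add_left_eq)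
qed

lemma pred_pos: fixes x k :: nat assumes "1 \<le> x" "1 \<le> k" shows "(x + k - 1) mod k = (x - 1) mod k"
proof -
  have "x + k - 1 = (x - 1) + k" using assms by auto
  then show ?thesis by simp
qed

lemma down_closed:
  assumes "\<forall>j<length l. l ! j = i \<longrightarrow> l ! ((j + length l - 1) mod length l) = i"
    and "j < length l" "l ! j = i"
  shows "d \<le> j \<Longrightarrow> l ! (j - d) = i"
proof (induction d)
  case 0 then show ?case using assms by simp
next
  case (Suc d)
  then have h: "l ! (j - d) = i" by simp
  have "j - d < length l" using assms by simp
  then have "l ! ((j - d + length l - 1) mod length l) = i" using assms(1) h by blast
  moreover have "(j - d + length l - 1) mod length l = j - Suc d"
    using Suc.prems assms(2) pred_pos[of "j-d" "length l"] by simp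
  ultimately show ?case by simp
qed

lemma s_pos:
  assumes "i \<in> set l" "2 \<le> card (set l)"
  shows "1 \<le> s_occ l i"
proof (rule ccontr)
  let ?k = "length l"
  assume "\<not> 1 \<le> s_occ l i"
  then have "s_occ l i = 0" by simp
  then have e: "{j \<in> {0..<?k}. l ! ((j + ?k - 1) mod ?k) \<noteq> i \<and> l ! j = i} = {}"
    unfolding s_occ_def by simp
  then have cl: "\<forall>j<?k. l ! j = i \<longrightarrow> l ! ((j + ?k - 1) mod ?k) = i" by auto
  obtain j0 where j0: "j0 < ?k" "l ! j0 = i" using assms(1) by (metis in_set_conv_nth)
  have k1: "1 \<le> ?k" using j0 by simp
  have "l ! 0 = i" using down_closed[OF cl j0, of j0] by simp
  moreover have "(0::nat) < ?k" using k1 by linarith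
  ultimately have "l ! ((0 + ?k - 1) mod ?k) = i" using cl by blast
  moreover have "(0 + ?k - 1) mod ?k = ?k - 1" using k1 by simp
  ultimately have lk: "l ! (?k - 1) = i" by simp
  have "\<forall>j<?k. l ! j = i"
  proof (intro allI impI)
    fix j assume "j < ?k"
    then show "l ! j = i" using down_closed[OF cl _ lk, of "?k - 1 - j"] k1 by simp
  qed
  then have "set l \<subseteq> {i}" by (auto simp: in_set_conv_nth)
  then have "card (set l) \<le> 1" using card_mono[of "{i}" "set l"] by simp
  then show False using assms by simp
qed



lemma ivt_nat: fixes a b :: nat shows "\<not> Q a \<Longrightarrow> Q b \<Longrightarrow> a \<le> b \<Longrightarrow> \<exists>r. a < r \<and> r \<le> b \<and> \<not> Q (r - 1) \<and> Q r"
proof (induction b)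
  case 0 then show ?case by simp
next
  case (Suc b)
  show ?case
  proof (cases "Q b")
    case True
    then have "a \<noteq> Suc b" using Suc by auto
    then have "a \<le> b" using Suc by simp
    then show ?thesis using Suc True by (metis le_Suc_eq)
  next
    case False
    have "a \<noteq> Suc b" using Suc by auto
    then show ?thesis using Suc False by (intro exI[of _ "Suc b"]) auto
  qed
qed

lemma cc_imp_s1:
  assumes "i \<in> set l" "2 \<le> card (set l)" "cyclically_consecutive l i"
  shows "s_occ l i = 1"
proof -
  let ?k = "length l"
  have k1: "1 \<le> ?k" using assms(1) by (cases l) auto
  obtain s len where P: "{j \<in> {0..<?k}. l ! j = i} = {(s + r) mod ?k | r. r < len}"
    using assms(3) unfolding cyclically_consecutive_def by blast
  have sub: "{j \<in> {0..<?k}. l ! ((j + ?k - 1) mod ?k) \<noteq> i \<and> l ! j = i} \<subseteq> {s mod ?k}"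
  proof
    fix j assume j: "j \<in> {j \<in> {0..<?k}. l ! ((j + ?k - 1) mod ?k) \<noteq> i \<and> l ! j = i}"
    then have "j \<in> {j \<in> {0..<?k}. l ! j = i}" by simp
    then obtain r where r: "r < len" "j = (s + r) mod ?k" using P by auto
    show "j \<in> {s mod ?k}"
    proof (cases r)
      case 0 then show ?thesis using r by simp
    next
      case (Suc r')
      have "(j + ?k - 1) mod ?k = (s + r + ?k - 1) mod ?k" using r pred_mod[OF k1] by simp
      also have "\<dots> = (s + r') mod ?k" using pred_pos[OF _ k1, of "s + r"] Suc by simp
      finally have "(j + ?k - 1) mod ?k \<in> {(s + r) mod ?k | r. r < len}" using Suc r by auto
      then have "l ! ((j + ?k - 1) mod ?k) = i" using P by blast
      then show ?thesis using j by simp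
    qed
  qed
  have "s_occ l i \<le> 1" unfolding s_occ_def using card_mono[OF _ sub] by simp
  then show ?thesis using s_pos[OF assms(1,2)] by simp
qed

lemma s1_imp_cc:
  assumes "i \<in> set l" "2 \<le> card (set l)" "s_occ l i = 1"
  shows "cyclically_consecutive l i"
proof -
  let ?k = "length l"
  let ?S = "{j \<in> {0..<?k}. l ! ((j + ?k - 1) mod ?k) \<noteq> i \<and> l ! j = i}"
  have k1: "1 \<le> ?k" using assms(1) by (cases l) auto
  have "card ?S = 1" using assms(3) unfolding s_occ_def .
  then obtain s0 where S: "?S = {s0}" by (rule card_1_singletonE)
  then have s0: "s0 < ?k" "l ! s0 = i" by auto
  have "\<exists>q \<in> set l. q \<noteq> i"
  proof (rule ccontr)
    assume "\<not> ?thesis"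
    then have "set l \<subseteq> {i}" by auto
    then show False using assms(2) card_mono[of "{i}" "set l"] by simp
  qed
  then obtain q where q: "q < ?k" "l ! q \<noteq> i" by (metis in_set_conv_nth)
  define Q where "Q r \<longleftrightarrow> l ! ((s0 + r) mod ?k) = i" for r
  have shift: "(s0 + (j + ?k - s0) mod ?k) mod ?k = j" if "j < ?k" for j
  proof -
    have "(s0 + (j + ?k - s0) mod ?k) mod ?k = (s0 + (j + ?k - s0)) mod ?k" by (simp add: mod_add_right_eq)
    also have "s0 + (j + ?k - s0) = j + ?k" using s0 by simp
    finally show ?thesis using that by simp
  qed
  have ex: "\<exists>r. \<not> Q r" using shift[OF q(1)] q(2) unfolding Q_def by metis
  define len where "len = (LEAST r. \<not> Q r)"
  have nQlen: "\<not> Q len" unfolding len_def using ex by (metis LeastI)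
  have "{j \<in> {0..<?k}. l ! j = i} = {(s0 + r) mod ?k | r. r < len}"
  proof
    show "{(s0 + r) mod ?k | r. r < len} \<subseteq> {j \<in> {0..<?k}. l ! j = i}"
    proof
      fix x assume "x \<in> {(s0 + r) mod ?k | r. r < len}"
      then obtain r where r: "r < len" "x = (s0 + r) mod ?k" by auto
      then have "Q r" unfolding len_def using not_less_Least by blast
      moreover have "x < ?k" using r k1 by (metis One_nat_def Suc_le_lessD mod_less_divisor)
      ultimately show "x \<in> {j \<in> {0..<?k}. l ! j = i}" using r unfolding Q_def by auto
    qed
  next
    show "{j \<in> {0..<?k}. l ! j = i} \<subseteq> {(s0 + r) mod ?k | r. r < len}"
    proof
      fix j assume j: "j \<in> {j \<in> {0..<?k}. l ! j = i}"
      define r where "r = (j + ?k - s0) mod ?k"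
      have jr: "(s0 + r) mod ?k = j" using shift j r_def by auto
      have rk: "r < ?k" using k1 r_def by (metis One_nat_def Suc_le_lessD mod_less_divisor)
      have "Q r" using jr j unfolding Q_def by simp
      have "r < len"
      proof (rule ccontr)
        assume "\<not> r < len"
        then obtain r' where r': "len < r'" "r' \<le> r" "\<not> Q (r' - 1)" "Q r'"
          using ivt_nat[of Q len r] nQlen \<open>Q r\<close> by auto
        have "((s0 + r') mod ?k + ?k - 1) mod ?k = (s0 + r' + ?k - 1) mod ?k" using pred_mod[OF k1] by simp
        also have "\<dots> = (s0 + (r' - 1)) mod ?k" using pred_pos[OF _ k1, of "s0 + r'"] r' by simp
        moreover have "(s0 + r') mod ?k < ?k" using k1 by (metis One_nat_def Suc_le_lessD mod_less_divisor)
        ultimately have "(s0 + r') mod ?k \<in> ?S" using r' unfolding Q_def by auto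
        then have eq: "(s0 + r') mod ?k = s0" using S by auto
        have "0 < r'" "r' < ?k" using r' rk by auto
        then show False
        proof (cases "s0 + r' < ?k")
          case True then show False using eq \<open>0 < r'\<close> by simp
        next
          case False
          then have "(s0 + r') mod ?k = s0 + r' - ?k" using s0 \<open>r' < ?k\<close> by (simp add: le_mod_geq)
          then show False using eq \<open>r' < ?k\<close> False by simp
        qed
      qed
      then show "j \<in> {(s0 + r) mod ?k | r. r < len}" using jr by auto
    qed
  qed
  then show ?thesis unfolding cyclically_consecutive_def by blast
qed

lemma sorted_s_le1:
  assumes "sorted l"
  shows "s_occ l i \<le> 1"
proof -
  let ?k = "length l"
  let ?S = "{j \<in> {0..<?k}. l ! ((j + ?k - 1) mod ?k) \<noteq> i \<and> l ! j = i}"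
  have fin: "finite ?S" by simp
  have "\<forall>a\<in>?S. \<forall>b\<in>?S. a = b"
  proof (intro ballI, rule ccontr)
    fix a b assume a: "a \<in> ?S" and b: "b \<in> ?S" and ne: "a \<noteq> b"
    have main: "False" if x: "x \<in> ?S" and y: "y \<in> ?S" and xy: "x < y" for x y
    proof -
      have "(y + ?k - 1) mod ?k = (y - 1) mod ?k" using xy y by (intro pred_pos) auto
      also have "\<dots> = y - 1" using y by auto
      finally have "(y + ?k - 1) mod ?k = y - 1" .
      then have "l ! (y - 1) \<noteq> i" using y by simp
      moreover have "l ! x \<le> l ! (y - 1)" "l ! (y - 1) \<le> l ! y"
        using sorted_nth_mono[OF assms] xy y by auto
      ultimately show False using x y by auto
    qed
    show False using ne main[OF a b] main[OF b a] by linarith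
  qed
  then have "card ?S \<le> Suc 0" using card_le_Suc0_iff_eq[OF fin] by blast
  then show ?thesis unfolding s_occ_def by simp
qed



lemma c_formula:
  assumes "admissible t k l" "1 \<le> k"
  shows "c_val t l = real k / 2 - (1 / real k) * (\<Sum>i\<in>set l. (real (n_occ l i))^2)
           + (1/2) * (real k - (\<Sum>i\<in>set l. real (s_occ l i)))"
proof -
  have len: "length l = k" and sub: "set l \<subseteq> {1..t}" using assms unfolding admissible_def by auto
  have nsum: "(\<Sum>i\<in>{1..t}. n_occ l i) = k"
    unfolding n_occ_def using sum_count_set[OF sub] len by simp
  have nms: "(\<Sum>i\<in>{1..t}. n_occ l i) = (\<Sum>i\<in>{1..t}. m_occ l i) + (\<Sum>i\<in>{1..t}. s_occ l i)"
    by (simp add: n_split sum.distrib)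
  then have msum: "(\<Sum>i\<in>{1..t}. real (m_occ l i)) = real k - (\<Sum>i\<in>{1..t}. real (s_occ l i))"
  proof -
    have "real (\<Sum>i\<in>{1..t}. n_occ l i) = real (\<Sum>i\<in>{1..t}. m_occ l i) + real (\<Sum>i\<in>{1..t}. s_occ l i)"
      using nms by simp
    moreover have "(\<Sum>i\<in>{1..t}. real (n_occ l i)) = real k" by (metis nsum of_nat_sum)
    ultimately show ?thesis by (simp add: of_nat_sum)
  qed
  have z: "n_occ l i = 0" "s_occ l i = 0" if "i \<notin> set l" for i
  proof -
    show "n_occ l i = 0" using that unfolding n_occ_def by simp
    then show "s_occ l i = 0" using n_split[of l i] by simp
  qed
  have e1: "(\<Sum>i\<in>{1..t}. (real (n_occ l i))^2) = (\<Sum>i\<in>set l. (real (n_occ l i))^2)"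
    by (rule sum.mono_neutral_right) (use sub z in auto)
  have e2: "(\<Sum>i\<in>{1..t}. real (s_occ l i)) = (\<Sum>i\<in>set l. real (s_occ l i))"
    by (rule sum.mono_neutral_right) (use sub z in auto)
  show ?thesis unfolding c_val_def len msum e1 e2 by (simp add: algebra_simps)
qed

lemma consec_sq:
  fixes x a :: nat
  shows "0 \<le> (real x - real a) * (real x - real a - 1)"
    and "(real x - real a) * (real x - real a - 1) = 0 \<longleftrightarrow> x = a \<or> x = a + 1"
proof -
  have "0 \<le> (real x - real a) * (real x - real a - 1) \<and>
      ((real x - real a) * (real x - real a - 1) = 0 \<longleftrightarrow> x = a \<or> x = a + 1)"
  proof (cases "x \<le> a")
    case True
    then have "real x - real a \<le> 0" "real x - real a - 1 < 0" by auto
    then show ?thesis using True by (auto simp: mult_nonpos_nonpos)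
  next
    case False
    then have "real x - real a > 0" "real x - real a - 1 \<ge> 0" by auto
    then show ?thesis using False by auto
  qed
  then show "0 \<le> (real x - real a) * (real x - real a - 1)"
    "(real x - real a) * (real x - real a - 1) = 0 \<longleftrightarrow> x = a \<or> x = a + 1" by auto
qed

lemma f_alt:
  assumes "1 \<le> k"
  shows "f_val k v = real k - real v / 2 - (2 * real (nat \<lfloor>real k / real v\<rfloor>) + 1)
     + real v * real (nat \<lfloor>real k / real v\<rfloor>) * (real (nat \<lfloor>real k / real v\<rfloor>) + 1) / real k"
proof -
  have "real (nat \<lfloor>real k / real v\<rfloor>) = of_int \<lfloor>real k / real v\<rfloor>" by simp
  then show ?thesis unfolding f_val_def using assms by (simp add: field_simps power2_eq_square)
qed

lemma main_bound:
  assumes adm: "admissible t k l" and k1: "1 \<le> k" and v2: "2 \<le> card (set l)"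
  defines "v \<equiv> card (set l)"
  defines "a \<equiv> nat \<lfloor>real k / real v\<rfloor>"
  shows "c_val t l \<le> f_val k v"
    and "c_val t l = f_val k v \<longleftrightarrow> (\<forall>i\<in>set l. s_occ l i = 1) \<and> (\<forall>i\<in>set l. n_occ l i = a \<or> n_occ l i = a + 1)"
proof -
  have len: "length l = k" and sub: "set l \<subseteq> {1..t}" using adm unfolding admissible_def by auto
  have nsum: "(\<Sum>i\<in>set l. real (n_occ l i)) = real k"
    using sum_count_set[of l "set l"] len unfolding n_occ_def by (metis finite_set of_nat_sum order_refl)
  define Q where "Q = (\<Sum>i\<in>set l. (real (n_occ l i) - real a) * (real (n_occ l i) - real a - 1))"
  define D where "D = (\<Sum>i\<in>set l. real (s_occ l i) - 1)"
  have Q0: "Q \<ge> 0" unfolding Q_def by (intro sum_nonneg) (simp add: consec_sq)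
  have D0: "D \<ge> 0" unfolding D_def using s_pos[OF _ v2] by (intro sum_nonneg) auto
  have sq: "(\<Sum>i\<in>set l. (real (n_occ l i))^2) = (2 * real a + 1) * real k - real v * real a * (real a + 1) + Q"
  proof -
    have "(\<Sum>i\<in>set l. (real (n_occ l i))^2) = (\<Sum>i\<in>set l. (2 * real a + 1) * real (n_occ l i) - real a * (real a + 1)
        + (real (n_occ l i) - real a) * (real (n_occ l i) - real a - 1))"
      by (rule sum.cong) (auto simp: algebra_simps power2_eq_square)
    also have "\<dots> = (2 * real a + 1) * (\<Sum>i\<in>set l. real (n_occ l i)) - real v * real a * (real a + 1) + Q"
      unfolding Q_def v_def by (simp add: sum.distrib sum_subtractf sum_distrib_left)
    finally show ?thesis using nsum by simp
  qed
  have ss: "(\<Sum>i\<in>set l. real (s_occ l i)) = real v + D"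
    unfolding D_def v_def by (simp add: sum_subtractf)
  have kpos: "real k > 0" using k1 by simp
  have ceq: "c_val t l = f_val k v - Q / real k - D / 2"
    unfolding c_formula[OF adm k1] f_alt[OF k1] sq ss a_def[symmetric]
    using kpos by (simp add: field_simps)
  have Qk: "Q / real k \<ge> 0" using Q0 kpos by simp
  show "c_val t l \<le> f_val k v" using ceq Qk D0 by linarith
  have "c_val t l = f_val k v \<longleftrightarrow> Q = 0 \<and> D = 0"
  proof -
    have "c_val t l = f_val k v \<longleftrightarrow> Q / real k = 0 \<and> D = 0" using ceq Qk D0 by linarith
    also have "Q / real k = 0 \<longleftrightarrow> Q = 0" using kpos by simp
    finally show ?thesis .
  qed
  also have "Q = 0 \<longleftrightarrow> (\<forall>i\<in>set l. n_occ l i = a \<or> n_occ l i = a + 1)"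
    unfolding Q_def by (subst sum_nonneg_eq_0_iff) (auto simp: consec_sq)
  also have "D = 0 \<longleftrightarrow> (\<forall>i\<in>set l. s_occ l i = 1)"
    unfolding D_def using s_pos[OF _ v2] by (subst sum_nonneg_eq_0_iff) force+
  finally show "c_val t l = f_val k v \<longleftrightarrow> (\<forall>i\<in>set l. s_occ l i = 1) \<and> (\<forall>i\<in>set l. n_occ l i = a \<or> n_occ l i = a + 1)"
    by blast
qed



fun blocks :: "(nat \<Rightarrow> nat) \<Rightarrow> nat \<Rightarrow> nat list" where
  "blocks sz 0 = []"
| "blocks sz (Suc n) = blocks sz n @ replicate (sz (Suc n)) (Suc n)"

lemma blocks_length: "length (blocks sz n) = (\<Sum>i\<in>{1..n}. sz i)"
  by (induction n) (auto simp: sum.atLeast1_atMost_eq)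

lemma blocks_set_sub: "set (blocks sz n) \<subseteq> {1..n}"
  by (induction n) auto

lemma count_replicate: "count_list (replicate m x) i = (if i = x then m else 0)"
  by (induction m) auto

lemma blocks_count: "count_list (blocks sz n) i = (if 1 \<le> i \<and> i \<le> n then sz i else 0)"
proof (induction n)
  case 0 then show ?case by simp
next
  case (Suc n)
  have "count_list (replicate (sz (Suc n)) (Suc n)) i = (if i = Suc n then sz (Suc n) else 0)"
    by (rule count_replicate)
  then show ?case using Suc by auto
qed


lemma blocks_set: assumes "\<forall>i. 1 \<le> i \<and> i \<le> n \<longrightarrow> 1 \<le> sz i" shows "set (blocks sz n) = {1..n}"
proof
  show "set (blocks sz n) \<subseteq> {1..n}" by (rule blocks_set_sub)
  show "{1..n} \<subseteq> set (blocks sz n)"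
  proof
    fix i assume "i \<in> {1..n}"
    then have "count_list (blocks sz n) i \<noteq> 0" using assms blocks_count[of sz n i] by auto
    then show "i \<in> set (blocks sz n)" using count_list_0_iff by metis
  qed
qed

lemma blocks_sorted: "sorted (blocks sz n)"
proof (induction n)
  case 0 then show ?case by simp
next
  case (Suc n)
  have "\<forall>x\<in>set (blocks sz n). x \<le> Suc n" using blocks_set_sub[of sz n] by auto
  then show ?case using Suc by (auto simp: sorted_append sorted_replicate)
qed

lemma existence:
  assumes "2 \<le> v" "v \<le> k" "k \<le> t"
  shows "\<exists>l. admissible t k l \<and> card (set l) = v \<and> c_val t l = f_val k v"
proof -
  define a where "a = k div v"
  define vp where "vp = k mod v"
  define sz where "sz i = (if i \<le> vp then a + 1 else a)" for i
  have "v div v \<le> k div v" by (rule div_le_mono) (use assms in simp)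
  then have a1: "1 \<le> a" unfolding a_def using assms by simp
  have vpv: "vp < v" unfolding vp_def using assms by simp
  have kk: "k = v * a + vp" unfolding a_def vp_def by simp
  define l where "l = blocks sz v"
  have "(\<Sum>i\<in>{1..v}. sz i) = (\<Sum>i\<in>{1..v}. a + (if i \<le> vp then 1 else 0))"
    unfolding sz_def by (rule sum.cong) auto
  also have "\<dots> = v * a + card {i \<in> {1..v}. i \<le> vp}"
    by (simp add: sum.distrib sum.If_cases Int_def conj_commute)
  also have "{i \<in> {1..v}. i \<le> vp} = {1..vp}" using vpv by auto
  finally have len: "length l = k" unfolding l_def blocks_length using kk by simp
  have setl: "set l = {1..v}" unfolding l_def using a1 by (intro blocks_set) (auto simp: sz_def)
  have card: "card (set l) = v" using setl by simp
  have adm: "admissible t k l" unfolding admissible_def using len setl assms by auto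
  have k1: "1 \<le> k" using assms by simp
  have av: "nat \<lfloor>real k / real v\<rfloor> = a" unfolding a_def
    by (metis floor_divide_of_nat_eq nat_int of_nat_nat)
  have s1: "\<forall>i\<in>set l. s_occ l i = 1"
    using sorted_s_le1[OF blocks_sorted[of sz v]] s_pos[of _ l] card assms unfolding l_def
    by (metis le_antisym)
  have n1: "\<forall>i\<in>set l. n_occ l i = a \<or> n_occ l i = a + 1"
    unfolding n_occ_def l_def using blocks_count[of sz v] setl by (auto simp: sz_def l_def)
  have "c_val t l = f_val k v"
    using main_bound(2)[OF adm k1] card assms s1 n1 av by auto
  then show ?thesis using adm card by blast
qed

lemma v1_zero:
  assumes adm: "admissible t k l" and k1: "1 \<le> k" and c1: "card (set l) = 1"
  shows "c_val t l = 0"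
proof -
  obtain i where si: "set l = {i}" using c1 by (metis card_1_singletonE)
  have len: "length l = k" using adm unfolding admissible_def by simp
  have "n_occ l i = k" unfolding n_occ_def using sum_count_set[of l "{i}"] si len by simp
  moreover have "s_occ l i = 0"
  proof -
    have "\<forall>j<length l. l ! j = i" using si by (metis nth_mem singletonD)
    moreover have "(j + length l - 1) mod length l < length l" if "j < length l" for j
      using that by (intro mod_less_divisor) linarith
    ultimately have "{j \<in> {0..<length l}. l ! ((j + length l - 1) mod length l) \<noteq> i \<and> l ! j = i} = {}"
      by auto
    then show ?thesis unfolding s_occ_def by simp
  qed
  ultimately show ?thesis unfolding c_formula[OF adm k1] si using k1 by (simp add: power2_eq_square)
qed

lemma f_upper:
  assumes k1: "1 \<le> k" and v1: "1 \<le> v"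
  shows "f_val k v \<le> real k - sqrt (2 * real k)"
proof -
  define A where "A = real (nat \<lfloor>real k / real v\<rfloor>)"
  define K where "K = real k"
  define V where "V = real v"
  have Kp: "K > 0" "V > 0" unfolding K_def V_def using k1 v1 by auto
  have "A = of_int \<lfloor>K / V\<rfloor>" unfolding A_def K_def V_def by simp
  then have h1: "A \<le> K / V" "K / V < A + 1" by linarith+
  have b1: "V * A \<le> K" using h1(1) Kp by (simp add: field_simps)
  have b2: "K < V * (A + 1)" using h1(2) Kp by (simp add: field_simps)
  have pr: "0 \<le> (K - V * A) * (V * (A + 1) - K)" using b1 b2 by simp
  have f: "f_val k v = K - V / 2 - (2 * A + 1) + V * A * (A + 1) / K"
    unfolding f_alt[OF k1] A_def K_def V_def by simp
  have "(2 * A + 1) - V * A * (A + 1) / K - K / V = (K - V * A) * (V * (A + 1) - K) / (K * V)"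
    using Kp by (simp add: field_simps)
  also have "\<dots> \<ge> 0" using pr Kp by simp
  finally have g: "f_val k v \<le> K - V / 2 - K / V" unfolding f by simp
  have "(V / 2 + K / V)^2 = (V / 2 - K / V)^2 + 2 * K" using Kp by (simp add: power2_eq_square field_simps)
  then have "2 * K \<le> (V / 2 + K / V)^2" by simp
  then have "sqrt (2 * K) \<le> V / 2 + K / V" using Kp by (metis real_le_lsqrt add_pos_pos divide_pos_pos half_gt_zero_iff less_eq_real_def real_sqrt_le_mono real_sqrt_unique zero_le_power2)
  then show ?thesis using g unfolding K_def by simp
qed

lemma f_sqrt_eq:
  assumes k3: "3 \<le> k" and s: "sqrt (2 * real k) = real s"
  shows "f_val k s = real k - real s" and "2 \<le> s" and "s \<le> k"
proof -
  have "(sqrt (2 * real k))^2 = 2 * real k" by simp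
  then have ss: "real (s * s) = real (2 * k)" using s by (simp add: power2_eq_square)
  then have ss': "s * s = 2 * k" by (metis of_nat_eq_iff)
  then have "even (s * s)" by simp
  then have "even s" by simp
  then obtain m where m: "s = 2 * m" by blast
  have km: "k = 2 * m * m" using ss' m by simp
  have m2: "2 \<le> m"
  proof (rule ccontr)
    assume "\<not> 2 \<le> m"
    then have "m \<le> 1" by simp
    then have "m * m \<le> 1" using mult_le_mono[of m 1 m 1] by simp
    then show False using km k3 by simp
  qed
  show "2 \<le> s" using m m2 by simp
  have "m \<le> m * m" using m2 by simp
  then show "s \<le> k" using m km by simp
  have fl: "nat \<lfloor>real k / real s\<rfloor> = m"
  proof -
    have "real k / real s = real m" using km m m2 by (simp add: field_simps)
    then show ?thesis by simp
  qed
  have k1: "1 \<le> k" using k3 by simp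
  have mp: "real m > 0" using m2 by simp
  show "f_val k s = real k - real s"
    unfolding f_alt[OF k1] fl using km m mp by (simp add: field_simps)
qed



lemma counting:
  fixes g :: "nat \<Rightarrow> nat"
  assumes fin: "finite A" and bal: "\<forall>i\<in>A. g i = a \<or> g i = a + 1" and sm: "(\<Sum>i\<in>A. g i) = k"
  shows "card {i \<in> A. g i = a + 1} = k - card A * a"
    and "card {i \<in> A. g i = a} = card A - (k - card A * a)"
proof -
  have "(\<Sum>i\<in>A. g i) = (\<Sum>i\<in>A. a + (if g i = a + 1 then 1 else 0))"
    using bal by (intro sum.cong) auto
  also have "\<dots> = card A * a + card {i \<in> A. g i = a + 1}"
    using fin by (simp add: sum.distrib sum.If_cases Int_def conj_commute)
  finally have e: "k = card A * a + card {i \<in> A. g i = a + 1}" using sm by simp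
  then show c1: "card {i \<in> A. g i = a + 1} = k - card A * a" by simp
  have "A = {i \<in> A. g i = a} \<union> {i \<in> A. g i = a + 1}" using bal by auto
  then have "card A = card {i \<in> A. g i = a} + card {i \<in> A. g i = a + 1}"
  proof -
    have "{i \<in> A. g i = a} \<inter> {i \<in> A. g i = a + 1} = {}" by auto
    moreover have "finite {i \<in> A. g i = a}" "finite {i \<in> A. g i = a + 1}" using fin by auto
    ultimately show ?thesis using \<open>A = _\<close> card_Un_disjoint by metis
  qed
  then show "card {i \<in> A. g i = a} = card A - (k - card A * a)" using c1 by simp
qed

lemma f_at_k: assumes "1 \<le> k" shows "f_val k k = real k / 2 - 1"
  using assms unfolding f_val_def by simp

lemma f_big: assumes "k < v" shows "f_val k v = real k - 1 - real v / 2"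
proof -
  have "\<lfloor>real k / real v\<rfloor> = 0" using assms by (simp add: floor_divide_of_nat_eq)
  then show ?thesis unfolding f_val_def by simp
qed

theorem proposition9:
  fixes t k :: nat
  assumes "3 \<le> k" and "k \<le> t"
  shows "(\<forall>l. admissible t k l \<longrightarrow>
           ((\<forall>l'. admissible t k l' \<longrightarrow> c_val t l' \<le> c_val t l) \<longleftrightarrow>
            (let vs = card (set l);
                 nm = nat \<lfloor>real k / real vs\<rfloor>;
                 np = nm + 1;
                 vp = k - vs * nm;
                 vm = vs - vp
             in vs \<in> {2..t} \<and> (\<forall>v\<in>{2..t}. f_val k v \<le> f_val k vs)
              \<and> (\<forall>i\<in>set l. n_occ l i = nm \<or> n_occ l i = np)
              \<and> card {i \<in> set l. n_occ l i = np} = vp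
              \<and> card {i \<in> set l. n_occ l i = nm} = vm
              \<and> (\<forall>i\<in>set l. cyclically_consecutive l i))))
       \<and> (\<forall>vs\<in>{2..t}. (\<forall>v\<in>{2..t}. f_val k v \<le> f_val k vs) \<longrightarrow>
            (\<forall>l. admissible t k l \<longrightarrow> c_val t l \<le> f_val k vs)
          \<and> (\<exists>l. admissible t k l \<and> c_val t l = f_val k vs)
          \<and> f_val k vs \<le> real k - sqrt (2 * real k)
          \<and> (sqrt (2 * real k) \<in> \<nat> \<longrightarrow> f_val k vs = real k - sqrt (2 * real k)))"
proof -
  have k1: "1 \<le> k" using assms by simp
  define F where "F = Max (f_val k ` {2..t})"
  have finF: "finite (f_val k ` {2..t})" "f_val k ` {2..t} \<noteq> {}" using assms by auto
  have Fge: "f_val k v \<le> F" if "v \<in> {2..t}" for v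
    unfolding F_def using finF that by (intro Max_ge) auto
  obtain v0 where v0: "v0 \<in> {2..t}" "f_val k v0 = F"
    using Max_in[OF finF] unfolding F_def by auto
  have fk: "f_val k k \<le> F" using Fge assms by simp
  have Fpos: "F > 0" using fk f_at_k[OF k1] assms by simp
  have v0k: "v0 \<le> k"
  proof (rule ccontr)
    assume "\<not> v0 \<le> k"
    then have "f_val k v0 = real k - 1 - real v0 / 2" "real v0 \<ge> real k + 1" using f_big by auto
    then have "f_val k v0 < f_val k k" using f_at_k[OF k1] by simp
    then show False using v0 fk by simp
  qed
  have cardle: "card (set l) \<le> t" if "admissible t k l" for l
    using that card_mono[of "{1..t}" "set l"] unfolding admissible_def by auto
  have cardpos: "1 \<le> card (set l)" if "admissible t k l" for l
  proof -
    have "l \<noteq> []" using that assms unfolding admissible_def by auto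
    then show ?thesis by (simp add: Suc_leI card_gt_0_iff)
  qed
  have A: "c_val t l \<le> F" if adm: "admissible t k l" for l
  proof (cases "card (set l) = 1")
    case True then show ?thesis using v1_zero[OF adm k1] Fpos by simp
  next
    case False
    then have v2: "2 \<le> card (set l)" using cardpos[OF adm] by simp
    then have "card (set l) \<in> {2..t}" using cardle[OF adm] by simp
    then show ?thesis using main_bound(1)[OF adm k1 v2] Fge by force
  qed
  obtain l0 where l0: "admissible t k l0" "c_val t l0 = F"
    using existence[of v0 k t] v0 v0k assms by auto
  have maxiff: "(\<forall>l'. admissible t k l' \<longrightarrow> c_val t l' \<le> c_val t l) \<longleftrightarrow> c_val t l = F"
    if "admissible t k l" for l
    using A l0 that by force
  have part1: "(c_val t l = F) \<longleftrightarrow>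
            (let vs = card (set l);
                 nm = nat \<lfloor>real k / real vs\<rfloor>;
                 np = nm + 1;
                 vp = k - vs * nm;
                 vm = vs - vp
             in vs \<in> {2..t} \<and> (\<forall>v\<in>{2..t}. f_val k v \<le> f_val k vs)
              \<and> (\<forall>i\<in>set l. n_occ l i = nm \<or> n_occ l i = np)
              \<and> card {i \<in> set l. n_occ l i = np} = vp
              \<and> card {i \<in> set l. n_occ l i = nm} = vm
              \<and> (\<forall>i\<in>set l. cyclically_consecutive l i))" if adm: "admissible t k l" for l
  proof -
    define v where "v = card (set l)"
    define a where "a = nat \<lfloor>real k / real v\<rfloor>"
    have len: "length l = k" using adm unfolding admissible_def by simp
    have nsum: "(\<Sum>i\<in>set l. n_occ l i) = k"
      using sum_count_set[of l "set l"] len unfolding n_occ_def by simp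
    show ?thesis
      unfolding Let_def v_def[symmetric] a_def[symmetric]
    proof
      assume c: "c_val t l = F"
      have v2: "2 \<le> v"
      proof (rule ccontr)
        assume "\<not> 2 \<le> v"
        then have "v = 1" using cardpos[OF adm] unfolding v_def by simp
        then show False using v1_zero[OF adm k1] c Fpos unfolding v_def by simp
      qed
      have vt: "v \<in> {2..t}" using v2 cardle[OF adm] unfolding v_def by simp
      have le: "c_val t l \<le> f_val k v" using main_bound(1)[OF adm k1] v2 unfolding v_def by simp
      have fv: "f_val k v = F" using le c Fge[OF vt] by simp
      have eq: "(\<forall>i\<in>set l. s_occ l i = 1) \<and> (\<forall>i\<in>set l. n_occ l i = a \<or> n_occ l i = a + 1)"
        using main_bound(2)[OF adm k1] v2 c fv unfolding v_def a_def by simp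
      have cc: "\<forall>i\<in>set l. cyclically_consecutive l i"
        using eq s1_imp_cc v2 unfolding v_def by blast
      show "v \<in> {2..t} \<and> (\<forall>va\<in>{2..t}. f_val k va \<le> f_val k v) \<and>
        (\<forall>i\<in>set l. n_occ l i = a \<or> n_occ l i = a + 1) \<and>
        card {i \<in> set l. n_occ l i = a + 1} = k - v * a \<and>
        card {i \<in> set l. n_occ l i = a} = v - (k - v * a) \<and> (\<forall>i\<in>set l. cyclically_consecutive l i)"
        using vt fv Fge eq cc counting[of "set l" "n_occ l" a k] nsum unfolding v_def by auto
    next
      assume h: "v \<in> {2..t} \<and> (\<forall>va\<in>{2..t}. f_val k va \<le> f_val k v) \<and>
        (\<forall>i\<in>set l. n_occ l i = a \<or> n_occ l i = a + 1) \<and>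
        card {i \<in> set l. n_occ l i = a + 1} = k - v * a \<and>
        card {i \<in> set l. n_occ l i = a} = v - (k - v * a) \<and> (\<forall>i\<in>set l. cyclically_consecutive l i)"
      then have v2: "2 \<le> v" by simp
      have s1: "\<forall>i\<in>set l. s_occ l i = 1" using h cc_imp_s1 v2 unfolding v_def by blast
      have "c_val t l = f_val k v" using main_bound(2)[OF adm k1] v2 s1 h unfolding v_def a_def by simp
      moreover have "f_val k v = F"
      proof -
        have "v \<in> {2..t}" "f_val k v0 \<le> f_val k v" using h v0(1) by auto
        then show ?thesis using Fge v0(2) by fastforce
      qed
      ultimately show "c_val t l = F" by simp
    qed
  qed
  have part2: "(\<forall>l. admissible t k l \<longrightarrow> c_val t l \<le> f_val k vs)
          \<and> (\<exists>l. admissible t k l \<and> c_val t l = f_val k vs)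
          \<and> f_val k vs \<le> real k - sqrt (2 * real k)
          \<and> (sqrt (2 * real k) \<in> \<nat> \<longrightarrow> f_val k vs = real k - sqrt (2 * real k))"
    if vs: "vs \<in> {2..t}" "\<forall>v\<in>{2..t}. f_val k v \<le> f_val k vs" for vs
  proof -
    have fvs: "f_val k vs = F"
    proof -
      have "f_val k v0 \<le> f_val k vs" using vs v0(1) by auto
      then show ?thesis using Fge[OF vs(1)] v0(2) by fastforce
    qed
    have up: "f_val k vs \<le> real k - sqrt (2 * real k)" using f_upper[OF k1] vs by simp
    have eqc: "f_val k vs = real k - sqrt (2 * real k)" if sN: "sqrt (2 * real k) \<in> \<nat>"
    proof -
      obtain s where s: "sqrt (2 * real k) = real s" using sN by (blast elim: Nats_cases)
      have "s \<in> {2..t}" using f_sqrt_eq[OF assms(1) s] assms by simp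
      then have "f_val k s \<le> f_val k vs" using vs by simp
      then show ?thesis using f_sqrt_eq(1)[OF assms(1) s] s up by simp
    qed
    show ?thesis using A l0 fvs up eqc by auto
  qed
  show ?thesis using maxiff part1 part2 by simp
qed

end
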